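(* For every $m\in\mathbb{N}_0$ and every real $t$ with $|t|<1$, \[ \frac{(\operatorname{arcsinh} t)^{m}}{\sqrt{1+t^2}}=t^m\left[1+\sum_{k=1}^{\infty}\frac{Q(m+1,2k;2)}{\binom{m+2k}{m}}\frac{(2t)^{2k}}{(2k)!}\right]. \]
   Context: $s(n,k)$ denotes the signed Stirling numbers of the first kind, defined by $\frac{[\ln(1+x)]^k}{k!}=\sum_{n=k}^\infty s(n,k)\frac{x^n}{n!}$ for $|x|<1$; equivalently $\prod_{j=0}^{n-1}(z-j)=\sum_{k=0}^n s(n,k)z^k$. For $m\in\mathbb{N}$, $k\in\mathbb{N}_0$ and $\alpha\in\mathbb{R}$ define \[ Q(m,k;\alpha)=\sum_{\ell=0}^{k}\binom{m+\ell-1}{m-1}\, s(m+k-1,m+\ell-1)\left(\frac{m+k-\alpha}{2}\right)^{\ell}, \] with the convention $0^0=1$. *)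

theory Defs
  imports "HOL-Analysis.Analysis" "HOL-Combinatorics.Stirling"
begin

text \<open>Signed Stirling numbers of the first kind s(n,k): the library's stirling n k is the
unsigned version, and s(n,k) = (-1)^(n-k) times it.\<close>
definition stirling1s :: "nat \<Rightarrow> nat \<Rightarrow> real" where
  "stirling1s n k = (-1) ^ (n - k) * real (stirling n k)"

text \<open>Q(m,k;alpha) for m >= 1, with 0^0 = 1 (Isabelle's x^0 = 1).\<close>
definition Qfun :: "nat \<Rightarrow> nat \<Rightarrow> real \<Rightarrow> real" where
  "Qfun m k \<alpha> = (\<Sum>l\<le>k. real ((m + l - 1) choose (m - 1))
      * stirling1s (m + k - 1) (m + l - 1) * ((real (m + k) - \<alpha>) / 2) ^ l)"

end

theory Submission
  imports Defs "HOL-Computational_Algebra.Polynomial"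
begin


fun ee :: "nat \<Rightarrow> nat \<Rightarrow> real" where
  "ee 0 m = (if m = 0 then 1 else 0)"
| "ee (Suc 0) m = (if m = 1 then 1 else 0)"
| "ee (Suc (Suc N)) m = (if 2 \<le> m then ee N (m - 2) else 0) - (real N + 1)^2 * ee N m"

lemma ee_less: "N < m \<Longrightarrow> ee N m = 0"
  by (induction N m rule: ee.induct) auto

lemma ee_odd: "odd (N + m) \<Longrightarrow> ee N m = 0"
proof (induction N m rule: ee.induct)
  case (3 N m)
  then show ?case
    by (cases "2 \<le> m") (auto simp: Suc_diff_le)
qed (auto simp: odd_pos)

lemma ee_same: "ee m m = 1"
proof (induction m rule: less_induct)
  case (less n)
  then show ?case
  proof (cases "n < 2")
    case True then have "n = 0 \<or> n = 1" by auto
    thus ?thesis by auto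
  next
    case False then obtain k where k: "n = Suc (Suc k)" by (metis add_2_eq_Suc le_Suc_ex not_less)
    thus ?thesis using less[of k] by (simp add: ee_less)
  qed
qed

definition pp :: "nat \<Rightarrow> real poly" where
  "pp N = (\<Prod>j<N. [: real N - 1 - 2 * real j, 1 :])"

lemma pp_rec: "pp (Suc (Suc N)) = [: - ((real N + 1)^2), 0, 1 :] * pp N"
proof (rule poly_ext)
  fix a :: real
  have "poly (pp (Suc (Suc N))) a = (\<Prod>j<Suc (Suc N). a + (real N + 1 - 2 * real j))"
    unfolding pp_def by (simp add: poly_prod algebra_simps)
  also have "\<dots> = (\<Prod>j<Suc N. a + (real N + 1 - 2 * real (Suc j))) * (a + (real N + 1))"
    by (subst prod.lessThan_Suc_shift) simp
  also have "\<dots> = (\<Prod>j<N. a + (real N + 1 - 2 * real (Suc j))) * (a - (real N + 1)) * (a + (real N + 1))"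
    by (simp add: algebra_simps)
  also have "(\<Prod>j<N. a + (real N + 1 - 2 * real (Suc j))) = poly (pp N) a"
    unfolding pp_def by (simp add: poly_prod algebra_simps)
  finally show "poly (pp (Suc (Suc N))) a = poly ([: - ((real N + 1)^2), 0, 1 :] * pp N) a"
    by (simp add: algebra_simps power2_eq_square)
qed

lemma coeff_pp: "coeff (pp N) m = ee N m"
proof (induction N m rule: ee.induct)
  case (1 m)
  then show ?case by (simp add: pp_def)
next
  case (2 m)
  then show ?case by (auto simp: pp_def coeff_pCons split: nat.split)
next
  case (3 N m)
  have e: "[: - ((real N + 1)^2), 0, 1 :] * p = smult (- ((real N + 1)^2)) p + pCons 0 (pCons 0 p)" for p :: "real poly"
    by (simp add: algebra_simps)
  show ?case
  proof (cases "2 \<le> m")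
    case True
    then obtain i where "m = Suc (Suc i)" by (metis add_2_eq_Suc le_Suc_ex)
    then show ?thesis using 3 True by (simp add: pp_rec e)
  next
    case False
    then have "m = 0 \<or> m = 1" by auto
    then show ?thesis using 3 False by (auto simp add: pp_rec e)
  qed
qed



lemma falling_stirling: "(\<Sum>k\<le>N. stirling1s N k * x ^ k) = (\<Prod>j<N. x - real j)"
proof -
  have "(\<Sum>k\<le>N. real (stirling N k) * (-x) ^ k) = pochhammer (-x) N"
    by (rule stirling_pochhammer)
  also have "\<dots> = (\<Prod>j<N. (-1) * (x - real j))"
    by (simp add: pochhammer_prod atLeast0LessThan)
  also have "\<dots> = (-1)^N * (\<Prod>j<N. x - real j)"
    by (simp only: prod.distrib prod_constant card_lessThan)
  finally have *: "(\<Sum>k\<le>N. real (stirling N k) * (-x) ^ k) = (-1)^N * (\<Prod>j<N. x - real j)" .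
  have "(\<Sum>k\<le>N. stirling1s N k * x ^ k) = (-1)^N * (\<Sum>k\<le>N. real (stirling N k) * (-x) ^ k)"
    unfolding sum_distrib_left
  proof (rule sum.cong)
    fix k assume "k \<in> {..N}"
    then have "k \<le> N" by simp
    have eq: "N + k = (N - k) + 2*k" using \<open>k \<le> N\<close> by simp
    have "(-1::real)^(N+k) = (-1)^(N-k) * ((-1)^2)^k"
      by (subst eq) (simp only: power_add power_mult)
    then have h: "(-1::real)^(N-k) = (-1)^N * (-1)^k"
      by (simp add: power_add)
    have h2: "(-x)^k = (-1)^k * x^k" by (rule power_minus)
    show "stirling1s N k * x ^ k = (-1)^N * (real (stirling N k) * (-x) ^ k)"
      unfolding stirling1s_def h h2 by (simp only: mult_ac)
  qed simp
  also have "\<dots> = (\<Prod>j<N. x - real j)" using * by simp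
  finally show ?thesis .
qed

lemma poly_pp: "poly (pp N) a = 2^N * (\<Prod>j<N. (a + real N - 1)/2 - real j)"
proof -
  have "poly (pp N) a = (\<Prod>j<N. 2 * ((a + real N - 1)/2 - real j))"
    unfolding pp_def poly_prod by (intro prod.cong) (auto simp: algebra_simps)
  also have "\<dots> = 2^N * (\<Prod>j<N. (a + real N - 1)/2 - real j)"
    by (simp only: prod.distrib prod_constant card_lessThan)
  finally show ?thesis .
qed

lemma pp_expand: "pp N = (\<Sum>j\<le>N. \<Sum>i\<le>j. smult (stirling1s N j * 2^(N-j) * real (j choose i) * (real N - 1)^(j-i)) (monom 1 i))"
proof (rule poly_ext)
  fix a :: real
  have "poly (\<Sum>j\<le>N. \<Sum>i\<le>j. smult (stirling1s N j * 2^(N-j) * real (j choose i) * (real N - 1)^(j-i)) (monom 1 i)) a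
      = (\<Sum>j\<le>N. stirling1s N j * 2^(N-j) * (\<Sum>i\<le>j. real (j choose i) * a^i * (real N - 1)^(j-i)))"
    by (simp add: poly_sum poly_monom sum_distrib_left mult_ac)
  also have "\<dots> = (\<Sum>j\<le>N. stirling1s N j * 2^(N-j) * (a + (real N - 1))^j)"
    by (simp add: binomial_ring)
  also have "\<dots> = (\<Sum>j\<le>N. 2^N * (stirling1s N j * ((a + real N - 1)/2)^j))"
  proof (rule sum.cong)
    fix j assume "j \<in> {..N}"
    then have "N = (N - j) + j" by simp
    then have "(2::real)^N = 2^(N-j) * 2^j" by (metis power_add)
    then show "stirling1s N j * 2^(N-j) * (a + (real N - 1))^j = 2^N * (stirling1s N j * ((a + real N - 1)/2)^j)"
      by (simp add: power_divide field_simps)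
  qed simp
  also have "\<dots> = poly (pp N) a"
    by (simp add: poly_pp falling_stirling flip: sum_distrib_left)
  finally show "poly (pp N) a = poly (\<Sum>j\<le>N. \<Sum>i\<le>j. smult (stirling1s N j * 2^(N-j) * real (j choose i) * (real N - 1)^(j-i)) (monom 1 i)) a"
    by simp
qed

lemma sum_delta_mult: "(\<Sum>i\<le>(j::nat). f i * (if i = m then 1 else 0)) = (if m \<le> j then f m else (0::real))"
proof -
  have "(\<Sum>i\<le>j. f i * (if i = m then 1 else 0)) = (\<Sum>i\<in>{..j}. if i = m then f i else 0)"
    by (rule sum.cong) auto
  also have "\<dots> = (if m \<in> {..j} then f m else 0)" by (rule sum.delta) simp
  finally show ?thesis by simp
qed

lemma ee_stirling: "ee N m = (\<Sum>j\<le>N. stirling1s N j * 2^(N-j) * real (j choose m) * (real N - 1)^(j-m))"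
proof -
  have "ee N m = coeff (pp N) m" by (simp add: coeff_pp)
  also have "\<dots> = (\<Sum>j\<le>N. (if m \<le> j then stirling1s N j * 2^(N-j) * real (j choose m) * (real N - 1)^(j-m) else 0))"
    by (subst pp_expand) (simp add: coeff_sum coeff_monom sum_delta_mult)
  also have "\<dots> = (\<Sum>j\<le>N. stirling1s N j * 2^(N-j) * real (j choose m) * (real N - 1)^(j-m))"
    by (intro sum.cong refl) auto
  finally show ?thesis .
qed



lemma ee_Qfun: "ee (m + 2*k) m = 4^k * Qfun (m+1) (2*k) 2"
proof -
  define N where "N = m + 2*k"
  define f where "f j = stirling1s N j * 2^(N-j) * real (j choose m) * (real N - 1)^(j-m)" for j
  have "ee N m = (\<Sum>j\<le>N. f j)" by (simp add: ee_stirling f_def)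
  also have "\<dots> = (\<Sum>j\<in>{m..N}. f j)"
    by (rule sum.mono_neutral_right) (auto simp: f_def)
  also have "\<dots> = (\<Sum>l\<in>{0..2*k}. f (l + m))"
    unfolding N_def using sum.shift_bounds_cl_nat_ivl[of f 0 m "2*k"] by (simp add: add.commute)
  also have "\<dots> = (\<Sum>l\<le>2*k. 4^k * (real ((m + l) choose m) * stirling1s N (m + l) * ((real N - 1)/2)^l))"
    unfolding atLeast0AtMost
  proof (rule sum.cong[OF refl])
    fix l assume "l \<in> {..2*k}"
    then have "l \<le> 2*k" by simp
    have "(4::real)^k = 2^(2*k)" by (simp add: power_mult)
    also have "\<dots> = 2^(2*k-l) * 2^l" using \<open>l \<le> 2*k\<close> by (simp flip: power_add)
    finally have "(4::real)^k = 2^(2*k-l) * 2^l" .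
    moreover have "N - (l + m) = 2*k - l" by (simp add: N_def)
    ultimately show "f (l + m) = 4^k * (real ((m + l) choose m) * stirling1s N (m + l) * ((real N - 1)/2)^l)"
      unfolding f_def by (simp add: power_divide field_simps add.commute)
  qed
  also have "\<dots> = 4^k * Qfun (m+1) (2*k) 2"
    by (simp add: Qfun_def N_def sum_distrib_left algebra_simps)
  finally show ?thesis by (simp add: N_def)
qed



definition bb :: "nat \<Rightarrow> nat \<Rightarrow> real" where
  "bb m N = fact m * ee N m / fact N"

lemma cancel_aux: "P \<noteq> 0 \<Longrightarrow> a / (P * F) * P = a / (F::real)"
  by (cases "F = 0") (simp_all add: field_simps)

lemma bb_rec:
  "bb m (Suc (Suc N)) * ((real N + 2) * (real N + 1)) =
     (if 2 \<le> m then real m * (real m - 1) * bb (m - 2) N else 0) - (real N + 1)^2 * bb m N"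
proof -
  have fN: "fact (Suc (Suc N)) = (real N + 2) * (real N + 1) * (fact N :: real)"
    by (simp add: algebra_simps)
  have "bb m (Suc (Suc N)) * ((real N + 2) * (real N + 1)) = fact m * ee (Suc (Suc N)) m / fact N"
    unfolding bb_def fN by (rule cancel_aux) simp
  also have "\<dots> = (if 2 \<le> m then real m * (real m - 1) * bb (m - 2) N else 0) - (real N + 1)^2 * bb m N"
  proof (cases "2 \<le> m")
    case True
    then obtain i where i: "m = Suc (Suc i)" by (metis add_2_eq_Suc le_Suc_ex)
    show ?thesis using True unfolding i bb_def by (simp add: field_simps)
  next
    case False
    then show ?thesis unfolding bb_def by (simp add: field_simps)
  qed
  finally show ?thesis .
qed

lemma bb_bound: "\<bar>bb m N\<bar> \<le> fact m * (real N + 1)^m"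
proof (induction N m rule: ee.induct)
  case (1 m)
  then show ?case by (simp add: bb_def)
next
  case (2 m)
  then show ?case by (simp add: bb_def)
next
  case (3 N m)
  define X where "X = real N + 1"
  have X1: "X \<ge> 1" by (simp add: X_def)
  have pos: "(real N + 2) * (real N + 1) > 0" by simp
  have A: "X^2 * \<bar>bb m N\<bar> \<le> ((real N + 2) * (real N + 1)) * (fact m * X^m)"
  proof -
    have "X^2 * \<bar>bb m N\<bar> \<le> X^2 * (fact m * X^m)"
      using 3(2) by (intro mult_left_mono) (auto simp: X_def)
    also have "\<dots> \<le> ((real N + 2) * (real N + 1)) * (fact m * X^m)"
      by (intro mult_right_mono) (auto simp: X_def power2_eq_square)
    finally show ?thesis .
  qed
  show ?case
  proof (cases "2 \<le> m")
    case True
    then obtain i where i: "m = Suc (Suc i)" by (metis add_2_eq_Suc le_Suc_ex)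
    have IH2: "\<bar>bb i N\<bar> \<le> fact i * X^i" using 3(1) True i by (simp add: X_def)
    have B: "\<bar>real m * (real m - 1) * bb (m - 2) N\<bar> \<le> ((real N + 2) * (real N + 1)) * (fact m * X^(m-1))"
    proof -
      have "\<bar>real m * (real m - 1) * bb (m - 2) N\<bar> = real m * (real m - 1) * \<bar>bb i N\<bar>"
        using i by (simp add: abs_mult)
      also have "\<dots> \<le> real m * (real m - 1) * (fact i * X^i)"
        using IH2 i by (intro mult_left_mono) auto
      also have "\<dots> = fact m * X^i" using i by (simp add: algebra_simps)
      also have "\<dots> \<le> fact m * X^(m-1)"
        using i X1 by (intro mult_left_mono power_increasing) auto
      also have "\<dots> \<le> ((real N + 2) * (real N + 1)) * (fact m * X^(m-1))"
      proof -
        have P1: "(1::real) * 1 \<le> (real N + 2) * (real N + 1)" by (intro mult_mono) auto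
        have "0 \<le> fact m * X^(m-1)" using X1 by simp
        from mult_right_mono[OF P1 this] show ?thesis by simp
      qed
      finally show ?thesis .
    qed
    have C: "X^m + X^(m-1) \<le> (X + 2)^m"
    proof -
      have "(X + 2)^m = (X + 2) * (X + 2)^(m-1)" using i by simp
      also have "\<dots> \<ge> (X + 2) * X^(m-1)"
        using X1 by (intro mult_left_mono power_mono) auto
      finally have "(X + 2)^m \<ge> X * X^(m-1) + 2 * X^(m-1)" by (simp add: algebra_simps)
      moreover have "X * X^(m-1) = X^m" using i by simp
      moreover have "X^(m-1) \<ge> 0" using X1 by simp
      ultimately show ?thesis by linarith
    qed
    have "\<bar>bb m (Suc (Suc N))\<bar> * ((real N + 2) * (real N + 1))
        = \<bar>bb m (Suc (Suc N)) * ((real N + 2) * (real N + 1))\<bar>"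
      using pos by (simp add: abs_mult)
    also have "\<dots> = \<bar>real m * (real m - 1) * bb (m - 2) N - X^2 * bb m N\<bar>"
      using bb_rec[of m N] True by (simp add: X_def)
    also have "\<dots> \<le> \<bar>real m * (real m - 1) * bb (m - 2) N\<bar> + X^2 * \<bar>bb m N\<bar>"
      using abs_triangle_ineq4[of "real m * (real m - 1) * bb (m-2) N" "X^2 * bb m N"]
      by (simp add: abs_mult)
    also have "\<dots> \<le> ((real N + 2) * (real N + 1)) * (fact m * (X^m + X^(m-1)))"
      using A B by (simp add: algebra_simps)
    also have "\<dots> \<le> ((real N + 2) * (real N + 1)) * (fact m * (X + 2)^m)"
      using C pos by (intro mult_left_mono) auto
    finally have "\<bar>bb m (Suc (Suc N))\<bar> \<le> fact m * (X + 2)^m"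
      using pos by (simp add: mult.commute)
    then show ?thesis by (simp add: X_def algebra_simps)
  next
    case False
    have "\<bar>bb m (Suc (Suc N))\<bar> * ((real N + 2) * (real N + 1))
        = \<bar>bb m (Suc (Suc N)) * ((real N + 2) * (real N + 1))\<bar>"
      using pos by (simp add: abs_mult)
    also have "\<dots> = X^2 * \<bar>bb m N\<bar>"
      using bb_rec[of m N] False by (simp add: X_def abs_mult)
    also have "\<dots> \<le> ((real N + 2) * (real N + 1)) * (fact m * X^m)" by (rule A)
    finally have "\<bar>bb m (Suc (Suc N))\<bar> \<le> fact m * X^m"
      using pos by (simp add: mult.commute)
    also have "\<dots> \<le> fact m * (X + 2)^m"
      using X1 by (intro mult_left_mono power_mono) auto
    finally show ?thesis by (simp add: X_def algebra_simps)
  qed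
qed



definition pbound :: "(nat \<Rightarrow> real) \<Rightarrow> bool" where
  "pbound c \<longleftrightarrow> (\<exists>C p. \<forall>n. \<bar>c n\<bar> \<le> C * (real n + 1)^p)"

lemma summable_poly_geom: "\<bar>x\<bar> < 1 \<Longrightarrow> summable (\<lambda>n. (real n + 1)^p * x^n)"
proof (induction p arbitrary: x)
  case 0
  then show ?case by (simp add: summable_geometric)
next
  case (Suc p)
  have "summable (\<lambda>n. diffs (\<lambda>n. (real n + 1)^p) n * \<bar>x\<bar>^n)"
    by (rule termdiff_converges[of "\<bar>x\<bar>" 1]) (use Suc in auto)
  then show ?case
  proof (rule summable_comparison_test'[where N = 0])
    fix n :: nat
    have "(real n + 1)^p \<le> (real (Suc n) + 1)^p" by (intro power_mono) auto
    then have "(real n + 1)^Suc p \<le> real (Suc n) * (real (Suc n) + 1)^p"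
      by (simp add: mult_left_mono add.commute)
    then have "(real n + 1)^Suc p * \<bar>x\<bar>^n \<le> real (Suc n) * (real (Suc n) + 1)^p * \<bar>x\<bar>^n"
      by (intro mult_right_mono) auto
    then show "norm ((real n + 1)^Suc p * x^n) \<le> diffs (\<lambda>n. (real n + 1)^p) n * \<bar>x\<bar>^n"
      by (simp add: diffs_def abs_mult power_abs)
  qed
qed

lemma pbound_summable:
  assumes "pbound c" "\<bar>x\<bar> < 1"
  shows "summable (\<lambda>n. c n * x^n)"
proof -
  obtain C p where Cp: "\<And>n. \<bar>c n\<bar> \<le> C * (real n + 1)^p" using assms(1) by (auto simp: pbound_def)
  have "summable (\<lambda>n. C * ((real n + 1)^p * \<bar>x\<bar>^n))"
    by (intro summable_mult summable_poly_geom) (use assms in auto)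
  then show ?thesis
  proof (rule summable_comparison_test'[where N = 0])
    fix n
    show "norm (c n * x^n) \<le> C * ((real n + 1)^p * \<bar>x\<bar>^n)"
      using mult_right_mono[OF Cp[of n], of "\<bar>x\<bar>^n"] by (simp add: abs_mult power_abs mult_ac)
  qed
qed

lemma pbound_diffs:
  assumes "pbound c"
  shows "pbound (diffs c)"
proof -
  obtain C p where Cp: "\<And>n. \<bar>c n\<bar> \<le> C * (real n + 1)^p" using assms(1) by (auto simp: pbound_def)
  have C0: "C \<ge> 0" using Cp[of 0] by simp
  have "\<bar>diffs c n\<bar> \<le> (C * 2^p) * (real n + 1)^(Suc p)" for n
  proof -
    have "\<bar>diffs c n\<bar> = (real n + 1) * \<bar>c (Suc n)\<bar>" by (simp add: diffs_def abs_mult add.commute)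
    also have "\<dots> \<le> (real n + 1) * (C * (real (Suc n) + 1)^p)"
      using Cp[of "Suc n"] by (intro mult_left_mono) auto
    also have "\<dots> \<le> (real n + 1) * (C * (2 * (real n + 1))^p)"
      using C0 by (intro mult_left_mono power_mono) auto
    also have "\<dots> = (C * 2^p) * (real n + 1)^(Suc p)" by (subst power_mult_distrib) (simp add: mult_ac)
    finally show ?thesis .
  qed
  then show ?thesis unfolding pbound_def by blast
qed

lemma pbound_bb: "pbound (bb m)"
  unfolding pbound_def using bb_bound by blast

definition HH :: "(nat \<Rightarrow> real) \<Rightarrow> real \<Rightarrow> real" where
  "HH c t = (\<Sum>n. c n * t^n)"

lemma HH_deriv:
  assumes "pbound c" "\<bar>t\<bar> < 1"
  shows "(HH c has_field_derivative HH (diffs c) t) (at t)"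
  unfolding HH_def
  by (rule termdiffs_strong'[of 1]) (use assms pbound_summable in auto)

lemma HH_sums: "pbound c \<Longrightarrow> \<bar>t\<bar> < 1 \<Longrightarrow> (\<lambda>n. c n * t^n) sums HH c t"
  unfolding HH_def by (rule summable_sums, rule pbound_summable)

lemma HH_diffs1:
  assumes "pbound c" "\<bar>t\<bar> < 1"
  shows "(\<lambda>n. real n * c n * t^n) sums (t * HH (diffs c) t)"
proof -
  have "(\<lambda>n. t * (diffs c n * t^n)) sums (t * HH (diffs c) t)"
    by (intro sums_mult HH_sums pbound_diffs assms)
  then have "(\<lambda>n. real (Suc n) * c (Suc n) * t^(Suc n)) sums (t * HH (diffs c) t)"
    by (simp add: diffs_def mult_ac)
  then show ?thesis using sums_Suc_iff[of "\<lambda>n. real n * c n * t^n"] by simp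
qed

lemma HH_diffs2:
  assumes "pbound c" "\<bar>t\<bar> < 1"
  shows "(\<lambda>n. real n * (real n - 1) * c n * t^n) sums (t^2 * HH (diffs (diffs c)) t)"
proof -
  have "(\<lambda>n. t^2 * (diffs (diffs c) n * t^n)) sums (t^2 * HH (diffs (diffs c)) t)"
    by (intro sums_mult HH_sums pbound_diffs assms)
  then have "(\<lambda>n. real (Suc (Suc n)) * (real (Suc (Suc n)) - 1) * c (Suc (Suc n)) * t^(Suc (Suc n))) sums (t^2 * HH (diffs (diffs c)) t)"
    by (simp add: diffs_def algebra_simps power2_eq_square)
  then have "(\<lambda>n. real (Suc n) * (real (Suc n) - 1) * c (Suc n) * t^(Suc n)) sums (t^2 * HH (diffs (diffs c)) t)"
    using sums_Suc_iff[of "\<lambda>n. real (Suc n) * (real (Suc n) - 1) * c (Suc n) * t^(Suc n)"] by simp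
  then show ?thesis using sums_Suc_iff[of "\<lambda>n. real n * (real n - 1) * c n * t^n"] by simp
qed

lemma HH_L:
  assumes "\<bar>t\<bar> < 1"
  shows "(1 + t^2) * HH (diffs (diffs (bb m))) t + 3 * t * HH (diffs (bb m)) t + HH (bb m) t
     = (if 2 \<le> m then real m * (real m - 1) * HH (bb (m-2)) t else 0)"
proof -
  let ?c = "bb m"
  have s0: "(\<lambda>n. ?c n * t^n) sums HH ?c t" by (intro HH_sums pbound_bb assms)
  have s1: "(\<lambda>n. real n * ?c n * t^n) sums (t * HH (diffs ?c) t)" by (intro HH_diffs1 pbound_bb assms)
  have s2: "(\<lambda>n. real n * (real n - 1) * ?c n * t^n) sums (t^2 * HH (diffs (diffs ?c)) t)"
    by (intro HH_diffs2 pbound_bb assms)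
  have s3: "(\<lambda>n. diffs (diffs ?c) n * t^n) sums HH (diffs (diffs ?c)) t"
    by (intro HH_sums pbound_diffs pbound_bb assms)
  have "(\<lambda>n. diffs (diffs ?c) n * t^n + real n * (real n - 1) * ?c n * t^n + 3 * (real n * ?c n * t^n) + ?c n * t^n)
     sums (HH (diffs (diffs ?c)) t + t^2 * HH (diffs (diffs ?c)) t + 3 * (t * HH (diffs ?c) t) + HH ?c t)"
    by (intro sums_add sums_mult s0 s1 s2 s3)
  moreover have "(\<lambda>n. diffs (diffs ?c) n * t^n + real n * (real n - 1) * ?c n * t^n + 3 * (real n * ?c n * t^n) + ?c n * t^n)
      = (\<lambda>n. (if 2 \<le> m then real m * (real m - 1) * (bb (m-2) n * t^n) else 0))"
  proof
    fix n
    have "diffs (diffs ?c) n = ?c (Suc (Suc n)) * ((real n + 2) * (real n + 1))"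
      by (simp add: diffs_def algebra_simps)
    then have "diffs (diffs ?c) n + real n * (real n - 1) * ?c n + 3 * (real n * ?c n) + ?c n
        = (if 2 \<le> m then real m * (real m - 1) * bb (m - 2) n else 0)"
      using bb_rec[of m n] by (simp add: algebra_simps power2_eq_square)
    then show "diffs (diffs ?c) n * t^n + real n * (real n - 1) * ?c n * t^n + 3 * (real n * ?c n * t^n) + ?c n * t^n
      = (if 2 \<le> m then real m * (real m - 1) * (bb (m-2) n * t^n) else 0)"
    proof -
      have "diffs (diffs ?c) n * t^n + real n * (real n - 1) * ?c n * t^n + 3 * (real n * ?c n * t^n) + ?c n * t^n
          = (diffs (diffs ?c) n + real n * (real n - 1) * ?c n + 3 * (real n * ?c n) + ?c n) * t^n"
        by (simp add: algebra_simps)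
      also have "\<dots> = (if 2 \<le> m then real m * (real m - 1) * bb (m - 2) n else 0) * t^n"
        by (simp only: \<open>diffs (diffs ?c) n + real n * (real n - 1) * ?c n + 3 * (real n * ?c n) + ?c n
        = (if 2 \<le> m then real m * (real m - 1) * bb (m - 2) n else 0)\<close>)
      finally show ?thesis by simp
    qed
  qed
  ultimately have "(\<lambda>n. (if 2 \<le> m then real m * (real m - 1) * (bb (m-2) n * t^n) else 0))
     sums (HH (diffs (diffs ?c)) t + t^2 * HH (diffs (diffs ?c)) t + 3 * (t * HH (diffs ?c) t) + HH ?c t)"
    by simp
  moreover have "(\<lambda>n. (if 2 \<le> m then real m * (real m - 1) * (bb (m-2) n * t^n) else 0))
     sums (if 2 \<le> m then real m * (real m - 1) * HH (bb (m-2)) t else 0)"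
    by (cases "2 \<le> m") (auto intro!: sums_mult HH_sums pbound_bb assms)
  ultimately have "HH (diffs (diffs ?c)) t + t^2 * HH (diffs (diffs ?c)) t + 3 * (t * HH (diffs ?c) t) + HH ?c t
     = (if 2 \<le> m then real m * (real m - 1) * HH (bb (m-2)) t else 0)"
    by (rule sums_unique2)
  then show ?thesis by (simp add: algebra_simps)
qed



lemma HH_zero: "HH c 0 = c 0"
  unfolding HH_def by (rule powser_zero)

lemma bb_0: "bb m 0 = (if m = 0 then 1 else 0)" by (simp add: bb_def)
lemma bb_1: "bb m (Suc 0) = (if m = 1 then 1 else 0)" by (simp add: bb_def)

lemma main_series:
  assumes "\<bar>t\<bar> < 1"
  shows "HH (bb m) t = arsinh t ^ m / sqrt (1 + t^2)"
  using assms
proof (induction m arbitrary: t rule: less_induct)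
  case (less m)
  define S where "S = {-1<..<(1::real)}"
  have convS: "convex S" unfolding S_def by (rule convex_real_interval)
  have inS: "x \<in> S \<longleftrightarrow> \<bar>x\<bar> < 1" for x unfolding S_def by auto
  define c where "c = bb m"
  have pc: "pbound c" "pbound (diffs c)" "pbound (diffs (diffs c))"
    unfolding c_def by (intro pbound_diffs pbound_bb)+
  have sq: "sqrt (1 + x^2) > 0" for x :: real by (simp add: add_pos_nonneg)
  have sq2: "sqrt (1 + x^2) * sqrt (1 + x^2) = 1 + x^2" for x :: real
    by (simp add: add_nonneg_nonneg)
  define \<Phi> where "\<Phi> x = (1 + x^2) * HH (diffs c) x + x * HH c x - real m * arsinh x ^ (m-1)" for x
  have \<Phi>0: "\<Phi> x = 0" if "x \<in> S" for x
  proof -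
    have "\<exists>K. \<forall>x\<in>S. \<Phi> x = K"
    proof (rule has_field_derivative_zero_constant[OF convS])
      fix x assume "x \<in> S"
      then have x1: "\<bar>x\<bar> < 1" by (simp add: inS)
      note d0 = HH_deriv[OF pc(1) x1] and d1 = HH_deriv[OF pc(2) x1]
      have D: "(\<Phi> has_field_derivative
          (2 * x * HH (diffs c) x + (1 + x^2) * HH (diffs (diffs c)) x + (HH c x + x * HH (diffs c) x)
           - real m * (real (m-1) * arsinh x ^ (m-1-1) / sqrt (1 + x^2)))) (at x)"
        unfolding \<Phi>_def
        by (auto intro!: derivative_eq_intros d0 d1 simp: add.commute field_simps)
      have L: "(1 + x^2) * HH (diffs (diffs c)) x + 3 * x * HH (diffs c) x + HH c x
          = (if 2 \<le> m then real m * (real m - 1) * HH (bb (m-2)) x else 0)"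
        unfolding c_def by (rule HH_L[OF x1])
      have E: "2 * x * HH (diffs c) x + (1 + x^2) * HH (diffs (diffs c)) x + (HH c x + x * HH (diffs c) x)
           - real m * (real (m-1) * arsinh x ^ (m-1-1) / sqrt (1 + x^2)) = 0"
      proof (cases "2 \<le> m")
        case True
        have IH: "HH (bb (m-2)) x = arsinh x ^ (m-2) / sqrt (1 + x^2)"
          using less.IH[of "m-2" x] True x1 by simp
        have "real (m-1) = real m - 1" using True by simp
        moreover have "m - 1 - 1 = m - 2" by simp
        ultimately show ?thesis using L True IH by (simp add: algebra_simps)
      next
        case False
        then have "real m * real (m-1) = 0" by (cases m) auto
        then show ?thesis using L False by (simp add: algebra_simps)
      qed
      show "(\<Phi> has_field_derivative 0) (at x within S)"
        using D E by (simp add: has_field_derivative_at_within)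
    qed
    then obtain K where K: "\<And>x. x \<in> S \<Longrightarrow> \<Phi> x = K" by blast
    have "0 \<in> S" by (simp add: inS)
    have "\<Phi> 0 = 0"
    proof -
      have "\<Phi> 0 = (if m = 1 then 1 else 0) - real m * 0 ^ (m - 1)"
        by (simp add: \<Phi>_def HH_zero c_def diffs_def bb_1)
      also have "\<dots> = 0" by (cases "m = 0"; cases "m = 1") auto
      finally show ?thesis .
    qed
    then show ?thesis using K[OF \<open>0 \<in> S\<close>] K[OF that] by simp
  qed
  define \<Psi> where "\<Psi> x = sqrt (1 + x^2) * HH c x - arsinh x ^ m" for x
  have "\<exists>K. \<forall>x\<in>S. \<Psi> x = K"
  proof (rule has_field_derivative_zero_constant[OF convS])
    fix x assume "x \<in> S"
    then have x1: "\<bar>x\<bar> < 1" by (simp add: inS)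
    note d0 = HH_deriv[OF pc(1) x1]
    have px: "1 + x^2 > 0" "1 + x^2 \<noteq> 0" "\<not> 1 + x^2 < 0" using sq[of x] by auto
    have D: "(\<Psi> has_field_derivative
        (x / sqrt (1 + x^2) * HH c x + sqrt (1 + x^2) * HH (diffs c) x - real m * arsinh x ^ (m-1) / sqrt (1 + x^2))) (at x)"
      unfolding \<Psi>_def using px
      by (auto intro!: derivative_eq_intros d0 simp: add.commute field_simps add_pos_nonneg)
    have "x / sqrt (1 + x^2) * HH c x + sqrt (1 + x^2) * HH (diffs c) x - real m * arsinh x ^ (m-1) / sqrt (1 + x^2)
        = \<Phi> x / sqrt (1 + x^2)"
      unfolding \<Phi>_def using sq[of x] sq2[of x]
      by (simp add: field_simps)
    also have "\<dots> = 0" using \<Phi>0[OF \<open>x \<in> S\<close>] by simp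
    finally show "(\<Psi> has_field_derivative 0) (at x within S)"
      using D by (simp add: has_field_derivative_at_within)
  qed
  then obtain K where K: "\<And>x. x \<in> S \<Longrightarrow> \<Psi> x = K" by blast
  have "0 \<in> S" by (simp add: inS)
  have "\<Psi> 0 = 0"
    by (cases m) (auto simp: \<Psi>_def HH_zero c_def bb_0)
  then have "\<Psi> t = 0" using K[OF \<open>0 \<in> S\<close>] K[of t] less.prems by (simp add: inS)
  then show ?case using sq[of t] unfolding \<Psi>_def c_def by (simp add: field_simps)
qed



lemma term_eq:
  "bb m (m + 2 * Suc k) * t ^ (m + 2 * Suc k) =
   t ^ m * (Qfun (m + 1) (2 * (k + 1)) 2 / real ((m + 2 * (k + 1)) choose m)
            * (2 * t) ^ (2 * (k + 1)) / fact (2 * (k + 1)))"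
proof -
  define j where "j = Suc k"
  define N where "N = m + 2 * j"
  have Nm: "N - m = 2 * j" by (simp add: N_def)
  have bin: "real (N choose m) = fact N / (fact m * fact (2 * j))"
    using binomial_fact[of m N] Nm by (simp add: N_def)
  have e: "ee N m = 4^j * Qfun (m+1) (2*j) 2" unfolding N_def by (rule ee_Qfun)
  have p: "(2 * t) ^ (2 * j) = 4^j * t^(2*j)" by (simp add: power_mult_distrib power_mult)
  have fpos: "fact N > (0::real)" "fact m > (0::real)" "fact (2*j) > (0::real)" by auto
  have "bb m N * t^N = t ^ m * (Qfun (m + 1) (2 * j) 2 / real (N choose m) * (2 * t) ^ (2 * j) / fact (2 * j))"
    unfolding bb_def e bin p using fpos by (simp add: N_def power_add field_simps)
  then show ?thesis by (simp add: N_def j_def)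
qed

lemma bb_same: "bb m m = 1" by (simp add: bb_def ee_same)

lemma bb_zero_off: "N \<notin> range (\<lambda>k. m + 2 * k) \<Longrightarrow> bb m N = 0"
proof -
  assume N: "N \<notin> range (\<lambda>k. m + 2 * k)"
  show ?thesis
  proof (cases "N < m")
    case True then show ?thesis by (simp add: bb_def ee_less)
  next
    case False
    have "odd (N + m)"
    proof
      assume "even (N + m)"
      then have "even (N - m)" using False by (metis add_diff_cancel_right' dvd_add_left_iff even_add le_add_diff_inverse2 not_less)
      then obtain k where "N - m = 2 * k" by (rule evenE)
      then have "N = m + 2 * k" using False by simp
      then show False using N by auto
    qed
    then show ?thesis by (simp add: bb_def ee_odd)
  qed
qed



theorem mainTheorem13:
  fixes m :: nat and t :: real
  assumes "\<bar>t\<bar> < 1"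
  shows "summable (\<lambda>k. Qfun (m + 1) (2 * (k + 1)) 2 / real ((m + 2 * (k + 1)) choose m)
            * (2 * t) ^ (2 * (k + 1)) / fact (2 * (k + 1))) \<and>
         arsinh t ^ m / sqrt (1 + t\<^sup>2) =
           t ^ m * (1 + (\<Sum>k. Qfun (m + 1) (2 * (k + 1)) 2 / real ((m + 2 * (k + 1)) choose m)
            * (2 * t) ^ (2 * (k + 1)) / fact (2 * (k + 1))))"
proof -
  define T where "T k = Qfun (m + 1) (2 * (k + 1)) 2 / real ((m + 2 * (k + 1)) choose m)
            * (2 * t) ^ (2 * (k + 1)) / fact (2 * (k + 1))" for k
  define V where "V = arsinh t ^ m / sqrt (1 + t\<^sup>2)"
  have s0: "(\<lambda>N. bb m N * t^N) sums V"
    using HH_sums[OF pbound_bb assms, of m] main_series[OF assms, of m] by (simp add: V_def)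
  have sm: "strict_mono (\<lambda>k::nat. m + 2 * k)" by (rule strict_monoI) simp
  have s1: "(\<lambda>k. bb m (m + 2 * k) * t^(m + 2 * k)) sums V"
    using sums_mono_reindex[OF sm, of "\<lambda>N. bb m N * t^N" V] s0 bb_zero_off by auto
  have s2: "(\<lambda>k. t^m * T k) sums (V - t^m)"
    using s1 sums_Suc_iff[of "\<lambda>k. bb m (m + 2 * k) * t^(m + 2 * k)" "V - t^m"]
    by (simp add: bb_same term_eq T_def del: mult_Suc_right)
  show ?thesis
  proof (cases "t = 0")
    case True
    have "T = (\<lambda>k. 0)" by (auto simp: T_def True)
    then have "summable T \<and> V = t^m * (1 + (\<Sum>k. T k))" using True by (simp add: V_def)
    then show ?thesis unfolding T_def V_def .
  next
    case False
    then have tm: "t^m \<noteq> 0" by simp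
    have "(\<lambda>k. T k) sums ((V - t^m) / t^m)"
      using sums_divide[OF s2, of "t^m"] tm False by simp
    then have "summable T" "(\<Sum>k. T k) = (V - t^m) / t^m"
      by (auto simp: sums_iff)
    then have "summable T \<and> V = t^m * (1 + (\<Sum>k. T k))" using tm by (simp add: field_simps)
    then show ?thesis unfolding T_def V_def .
  qed
qed


end
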